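(* Let $n\ge 2$ and let $(a_1,a_2,\dots,a_n)\in\mathbb{N}^n$ with $a_1\ge 2$. Choose a prime $\ell>\max\{a_1,\dots,a_n\}$ and write its base-$a_1$ expansion as \[ \ell=c_d a_1^{d-1}+c_{d-1}a_1^{d-2}+\cdots+c_2a_1+c_1,\qquad 0\le c_i<a_1. \] For each $2\le k\le n$ define \[ \mathcal{P}_k(x)=\frac{a_k}{\ell\,a_1}\,x\,\bigl(c_d x^{d-1}+c_{d-1}x^{d-2}+\cdots+c_1\bigr), \] and consider the curve $\Gamma:[0,a_1]\to\mathbb{R}^n$, $\Gamma(x)=\bigl(x,\mathcal{P}_2(x),\mathcal{P}_3(x),\dots,\mathcal{P}_n(x)\bigr)$. Then: (a) $\Gamma(0)=(0,0,\dots,0)$ and $\Gamma(a_1)=(a_1,a_2,\dots,a_n)$; (b) for every integer $1\le x\le a_1-1$, none of the values $\mathcal{P}_k(x)$ ($2\le k\le n$) is an integer; hence $\Gamma$ meets no lattice point of $\mathbb{Z}^n$ other than $\Gamma(0)$ and $\Gamma(a_1)$.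
   Context: $\mathbb{N}$ denotes the positive integers. *)

theory Defs
  imports Complex_Main "HOL-Computational_Algebra.Primes"
begin

definition Pk :: "(nat \<Rightarrow> nat) \<Rightarrow> nat \<Rightarrow> (nat \<Rightarrow> nat) \<Rightarrow> nat \<Rightarrow> nat \<Rightarrow> real \<Rightarrow> real" where
  "Pk a l c d k x = real (a k) / (real l * real (a 1)) * x * (\<Sum>i=1..d. real (c i) * x ^ (i - 1))"

definition Gamma :: "(nat \<Rightarrow> nat) \<Rightarrow> nat \<Rightarrow> (nat \<Rightarrow> nat) \<Rightarrow> nat \<Rightarrow> real \<Rightarrow> nat \<Rightarrow> real" where
  "Gamma a l c d x i = (if i = 1 then x else Pk a l c d i x)"

end

theory Submission
  imports Defs
begin

lemma Pk_nat:
  fixes x :: nat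
  shows "Pk a l c d k (real x) = real (a k * x * (\<Sum>i=1..d. c i * x ^ (i - 1))) / (real l * real (a 1))"
  unfolding Pk_def by (simp add: of_nat_sum)

lemma not_int_aux:
  fixes x :: nat
  assumes lprime: "prime l" and ak: "1 \<le> a k" "a k < l" and a1: "a 1 \<ge> 2" "a 1 < l"
    and x: "1 \<le> x" "x < a 1"
    and j: "j \<in> {2..d}" "c j > 0"
    and expansion: "l = (\<Sum>i=1..d. c i * a 1 ^ (i - 1))"
  shows "Pk a l c d k (real x) \<notin> \<int>"
proof
  define S where "S = (\<Sum>i=1..d. c i * x ^ (i - 1))"
  have Sle: "S < l"
    unfolding S_def expansion
  proof (rule sum_strict_mono_ex1)
    show "finite {1..d}" by simp
    show "\<forall>i\<in>{1..d}. c i * x ^ (i - 1) \<le> c i * a 1 ^ (i - 1)"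
      using x by (auto intro!: mult_left_mono power_mono)
    have "x ^ (j - 1) < a 1 ^ (j - 1)" using x j by (intro power_strict_mono) auto
    then show "\<exists>i\<in>{1..d}. c i * x ^ (i - 1) < c i * a 1 ^ (i - 1)"
      using j by (intro bexI[of _ j]) auto
  qed
  have le1: "c j * x ^ (j - 1) \<le> S"
    unfolding S_def using j by (intro member_le_sum) auto
  have lt1: "0 < c j * x ^ (j - 1)" using j x by simp
  have Spos: "0 < S" using lt1 le1 by (rule less_le_trans)
  have nd: "\<not> l dvd a k * x * S"
  proof
    assume "l dvd a k * x * S"
    then have "l dvd a k \<or> l dvd x \<or> l dvd S" using lprime by (simp add: prime_dvd_mult_iff)
    then show False using ak x a1 Sle Spos by (auto dest: dvd_imp_le)
  qed
  assume "Pk a l c d k (real x) \<in> \<int>"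
  then obtain m where m: "Pk a l c d k (real x) = of_int m" by (auto elim: Ints_cases)
  have lp: "l > 0" using lprime prime_gt_0_nat by blast
  have den: "real l * real (a 1) \<noteq> 0" using lp a1 by simp
  have q: "real (a k * x * S) / (real l * real (a 1)) = of_int m"
    using m unfolding Pk_nat S_def[symmetric] .
  have "real (a k * x * S) = of_int m * (real l * real (a 1))"
    using q by (rule iffD1[OF nonzero_divide_eq_eq[OF den]])
  then have "(of_int (int (a k * x * S)) :: real) = of_int (m * (int l * int (a 1)))"
    by (simp only: of_int_of_nat_eq of_int_mult)
  then have "int (a k * x * S) = m * (int l * int (a 1))"
    by (simp only: of_int_eq_iff)
  then have "int l dvd int (a k * x * S)" by (simp only: dvd_triv_left mult.left_commute[of m])
  then show False using nd by (simp only: of_nat_dvd_iff)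
qed

theorem lemma2p2:
  fixes n :: nat and a :: "nat \<Rightarrow> nat" and l :: nat and c :: "nat \<Rightarrow> nat" and d :: nat
  assumes n2: "n \<ge> 2"
    and apos: "\<forall>i\<in>{1..n}. a i \<ge> 1"
    and a1: "a 1 \<ge> 2"
    and lprime: "prime l"
    and lbig: "\<forall>i\<in>{1..n}. a i < l"
    and digits: "\<forall>i\<in>{1..d}. c i < a 1"
    and expansion: "l = (\<Sum>i=1..d. c i * a 1 ^ (i - 1))"
  shows "(\<forall>i\<in>{1..n}. Gamma a l c d 0 i = 0)
       \<and> (\<forall>i\<in>{1..n}. Gamma a l c d (real (a 1)) i = real (a i))
       \<and> (\<forall>x::int. 1 \<le> x \<and> x \<le> int (a 1) - 1 \<longrightarrow>
            (\<forall>k\<in>{2..n}. Pk a l c d k (real_of_int x) \<notin> \<int>))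
       \<and> (\<forall>t::real. 0 \<le> t \<and> t \<le> real (a 1) \<and> (\<forall>i\<in>{1..n}. Gamma a l c d t i \<in> \<int>)
            \<longrightarrow> t = 0 \<or> t = real (a 1))"
proof -
  have lp: "l > 0" using lprime prime_gt_0_nat by blast
  have a1l: "a 1 < l" using lbig n2 by auto
  have P1: "\<forall>i\<in>{1..n}. Gamma a l c d 0 i = 0"
    by (simp add: Gamma_def Pk_def)
  have P2: "\<forall>i\<in>{1..n}. Gamma a l c d (real (a 1)) i = real (a i)"
  proof
    fix i assume "i \<in> {1..n}"
    have "Pk a l c d i (real (a 1)) = real (a i)"
      using Pk_nat[of a l c d i "a 1"] lp a1 unfolding expansion[symmetric]
      by (simp add: field_simps)
    then show "Gamma a l c d (real (a 1)) i = real (a i)" by (simp add: Gamma_def)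
  qed
  obtain j where j: "j \<in> {2..d}" "c j > 0"
  proof (rule ccontr)
    assume "\<not> thesis"
    have z: "\<forall>j\<in>{2..d}. c j = 0"
    proof
      fix j assume "j \<in> {2..d}"
      then show "c j = 0" using that[of j] \<open>\<not> thesis\<close> by blast
    qed
    have "l \<le> c 1"
    proof (cases "d = 0")
      case True then show ?thesis using expansion by simp
    next
      case False
      then have "{1..d} = insert 1 {2..d}" by auto
      then have "l = c 1 + (\<Sum>i=2..d. c i * a 1 ^ (i - 1))" using expansion by simp
      also have "(\<Sum>i=2..d. c i * a 1 ^ (i - 1)) = 0" using z by simp
      finally show ?thesis by simp
    qed
    moreover have "c 1 < a 1" using digits a1l expansion by (cases "d = 0") auto
    ultimately show False using a1l by simp
  qed
  have P3: "\<forall>x::int. 1 \<le> x \<and> x \<le> int (a 1) - 1 \<longrightarrow>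
            (\<forall>k\<in>{2..n}. Pk a l c d k (real_of_int x) \<notin> \<int>)"
  proof (intro allI impI ballI)
    fix x :: int and k assume x: "1 \<le> x \<and> x \<le> int (a 1) - 1" and k: "k \<in> {2..n}"
    have ak: "1 \<le> a k" "a k < l" using apos lbig k by auto
    have "1 \<le> nat x" "nat x < a 1" using x by auto
    then have h: "Pk a l c d k (real (nat x)) \<notin> \<int>"
      by (rule not_int_aux[OF lprime ak a1 a1l _ _ j expansion])
    have e: "real_of_int x = real (nat x)" using x by simp
    show "Pk a l c d k (real_of_int x) \<notin> \<int>" unfolding e by (rule h)
  qed
  have P4: "\<forall>t::real. 0 \<le> t \<and> t \<le> real (a 1) \<and> (\<forall>i\<in>{1..n}. Gamma a l c d t i \<in> \<int>)
            \<longrightarrow> t = 0 \<or> t = real (a 1)"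
  proof (intro allI impI)
    fix t :: real assume h: "0 \<le> t \<and> t \<le> real (a 1) \<and> (\<forall>i\<in>{1..n}. Gamma a l c d t i \<in> \<int>)"
    have "Gamma a l c d t 1 \<in> \<int>" using h n2 by auto
    then obtain x where x: "t = of_int x" by (auto simp: Gamma_def elim: Ints_cases)
    have "Gamma a l c d t 2 \<in> \<int>" using h n2 by auto
    then have g2: "Pk a l c d 2 (real_of_int x) \<in> \<int>" using x by (simp add: Gamma_def)
    show "t = 0 \<or> t = real (a 1)"
    proof (rule ccontr)
      assume "\<not> ?thesis"
      then have "1 \<le> x \<and> x \<le> int (a 1) - 1" using h x by auto
      then show False using P3 g2 n2 by auto
    qed
  qed
  show ?thesis by (intro conjI P1 P2 P3 P4)
qed

end
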